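(* Let $n\ge3$, let $U$ be the cyclic shift on $\mathbb C^n$ given by $Ue_k=e_{k+1}$ (indices mod $n$), and let $T=U+I$. Then \[\|T\|_m=\frac2n\sum_{k=0}^{n-1}\Big|\cos\frac{k\pi}n\Big|=\begin{cases}\dfrac{2\cos(\frac\pi{2n})}{n\sin(\frac\pi{2n})}& n\text{ even},\\[2ex]\dfrac{2}{n\sin(\frac\pi{2n})}& n\text{ odd}.\end{cases}\] Consequently $\|T\|_m\to 4/\pi$ as $n\to\infty$, the values for odd $n$ decreasing to $4/\pi$ and the values for even $n$ increasing to $4/\pi$.
   Context: $\|T\|_m$ is the norm of the Schur multiplier $R=[r_{ij}]\mapsto[t_{ij}r_{ij}]$ on $n\times n$ complex matrices with the operator norm, where $[t_{ij}]$ is the matrix of $T$ in the standard basis $e_1,\dots,e_n$. *)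

theory Defs
  imports Complex_Main
begin

text \<open>n x n complex matrices are represented as functions nat => nat => complex,
  only entries with indices < n being relevant; vectors in C^n as nat => complex.\<close>

definition vec_norm :: "nat \<Rightarrow> (nat \<Rightarrow> complex) \<Rightarrow> real" where
  "vec_norm n v = sqrt (\<Sum>i<n. (cmod (v i))\<^sup>2)"

definition mat_apply :: "nat \<Rightarrow> (nat \<Rightarrow> nat \<Rightarrow> complex) \<Rightarrow> (nat \<Rightarrow> complex) \<Rightarrow> (nat \<Rightarrow> complex)" where
  "mat_apply n A v = (\<lambda>i. \<Sum>j<n. A i j * v j)"

definition op_norm :: "nat \<Rightarrow> (nat \<Rightarrow> nat \<Rightarrow> complex) \<Rightarrow> real" where
  "op_norm n A = Sup {vec_norm n (mat_apply n A v) | v. vec_norm n v \<le> 1}"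

definition schur_mult_norm :: "nat \<Rightarrow> (nat \<Rightarrow> nat \<Rightarrow> complex) \<Rightarrow> real" where
  "schur_mult_norm n T = Sup {op_norm n (\<lambda>i j. T i j * R i j) | R. op_norm n R \<le> 1}"

text \<open>Matrix of T = U + I where U e_k = e_{(k+1) mod n} (indices 0..n-1).\<close>
definition shift_plus_id :: "nat \<Rightarrow> nat \<Rightarrow> nat \<Rightarrow> complex" where
  "shift_plus_id n i j = (if i = (j + 1) mod n then 1 else 0) + (if i = j then 1 else 0)"

end

theory Submission
  imports Defs "HOL-Analysis.L2_Norm"
begin


definition ee :: "nat \<Rightarrow> real \<Rightarrow> complex" where
  "ee n t = cis (2 * pi * t / real n)"

lemma ee_add: "ee n (a + b) = ee n a * ee n b"
  unfolding ee_def by (simp add: cis_mult add_divide_distrib distrib_left)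

lemma ee_cnj: "cnj (ee n t) = ee n (- t)"
  unfolding ee_def by (simp add: cis_cnj)

lemma ee_norm [simp]: "cmod (ee n t) = 1"
  unfolding ee_def by simp

lemma ee_zero [simp]: "ee n 0 = 1"
  unfolding ee_def by simp

lemma ee_sum:
  assumes n: "n > 0"
  shows "(\<Sum>k<n. ee n (real k * of_int d)) = (if int n dvd d then of_nat n else 0)"
proof -
  define z where "z = ee n (of_int d)"
  have zk: "ee n (real k * of_int d) = z ^ k" for k
    unfolding z_def ee_def DeMoivre by (simp add: algebra_simps)
  show ?thesis
  proof (cases "int n dvd d")
    case True
    then obtain q where q: "d = int n * q" by blast
    have c: "cis (2 * pi * real_of_int q) = 1" by (rule cis_multiple_2pi) simp
    have "z = 1" unfolding z_def ee_def q using n c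
      by (simp add: field_simps)
    then show ?thesis using True by (simp add: zk)
  next
    case False
    have c: "cis (2 * pi * real_of_int d) = 1" by (rule cis_multiple_2pi) simp
    have "z ^ n = ee n (real n * of_int d)" by (simp add: zk)
    also have "\<dots> = 1" unfolding ee_def using n c by (simp add: field_simps)
    finally have zn: "z ^ n = 1" .
    have "z \<noteq> 1"
    proof
      assume "z = 1"
      then have "cos (2 * pi * of_int d / real n) = 1" unfolding z_def ee_def
        by (metis cis.sel(1) one_complex.simps(1))
      then obtain m :: int where m: "2 * pi * of_int d / real n = of_int m * 2 * pi"
        by (auto simp: cos_one_2pi_int)
      then have "of_int d = real n * of_int m" using n by (simp add: field_simps)
      then have "d = int n * m" by (metis of_int_eq_iff of_int_mult of_int_of_nat_eq)
      then show False using False by simp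
    qed
    then show ?thesis using False zn by (simp add: zk sum_gp_strict)
  qed
qed

lemma dvd_small: "i < n \<Longrightarrow> j < n \<Longrightarrow> (int n dvd (int i - int j)) = (i = j)"
proof
  assume a: "i < n" "j < n" "int n dvd (int i - int j)"
  then obtain q where q: "int i - int j = int n * q" by blast
  have h1: "int n * q < int n * 1" using q a by linarith
  have h2: "int n * (-1) < int n * q" using q a by linarith
  have p: "0 < int n" using a by linarith
  have "q < 1" using h1 p mult_less_cancel_left_pos by blast
  moreover have "-1 < q" using h2 p mult_less_cancel_left_pos by blast
  ultimately have "q = 0" by linarith
  then show "i = j" using q by simp
qed simp

lemma ee_orth:
  assumes "m < n" "m' < n"
  shows "(\<Sum>i<n. ee n (real i * real m) * cnj (ee n (real i * real m'))) = (if m = m' then of_nat n else 0)"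
proof -
  have n: "n > 0" using assms by simp
  have "(\<Sum>i<n. ee n (real i * real m) * cnj (ee n (real i * real m'))) =
        (\<Sum>i<n. ee n (real i * of_int (int m - int m')))"
    by (rule sum.cong) (auto simp: ee_cnj ee_add[symmetric] algebra_simps)
  also have "\<dots> = (if int n dvd (int m - int m') then of_nat n else 0)" by (rule ee_sum[OF n])
  also have "(int n dvd (int m - int m')) = (m = m')" by (rule dvd_small[OF assms])
  finally show ?thesis .
qed


lemma vn_L2: "vec_norm n v = L2_set (\<lambda>i. cmod (v i)) {..<n}"
  unfolding vec_norm_def L2_set_def by simp

lemma vn_nonneg [simp]: "0 \<le> vec_norm n v"
  unfolding vn_L2 by simp

lemma vn_cong: "(\<And>i. i < n \<Longrightarrow> v i = w i) \<Longrightarrow> vec_norm n v = vec_norm n w"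
  unfolding vec_norm_def by simp

lemma vn_sq: "(vec_norm n v)^2 = (\<Sum>i<n. (cmod (v i))^2)"
proof -
  have "0 \<le> (\<Sum>i<n. (cmod (v i))^2)" by (intro sum_nonneg) simp
  then show ?thesis unfolding vec_norm_def by simp
qed

lemma vn_add: "vec_norm n (\<lambda>i. v i + w i) \<le> vec_norm n v + vec_norm n w"
proof -
  have "vec_norm n (\<lambda>i. v i + w i) \<le> L2_set (\<lambda>i. cmod (v i) + cmod (w i)) {..<n}"
    unfolding vn_L2 by (rule L2_set_mono) (auto simp: norm_triangle_ineq)
  also have "\<dots> \<le> vec_norm n v + vec_norm n w"
    unfolding vn_L2 by (rule L2_set_triangle_ineq)
  finally show ?thesis .
qed

lemma vn_scale: "vec_norm n (\<lambda>i. c * v i) = cmod c * vec_norm n v"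
  unfolding vn_L2 by (simp add: L2_set_right_distrib norm_mult)

lemma vn_zero: "vec_norm n (\<lambda>i. 0) = 0"
  unfolding vec_norm_def by simp

lemma vn_sum: "finite K \<Longrightarrow> vec_norm n (\<lambda>i. \<Sum>k\<in>K. f k i) \<le> (\<Sum>k\<in>K. vec_norm n (f k))"
proof (induction K rule: finite_induct)
  case empty
  then show ?case by (simp add: vn_zero)
next
  case (insert x F)
  have "vec_norm n (\<lambda>i. \<Sum>k\<in>insert x F. f k i) = vec_norm n (\<lambda>i. f x i + (\<Sum>k\<in>F. f k i))"
    using insert by simp
  also have "\<dots> \<le> vec_norm n (f x) + vec_norm n (\<lambda>i. \<Sum>k\<in>F. f k i)"
    by (rule vn_add)
  also have "\<dots> \<le> vec_norm n (f x) + (\<Sum>k\<in>F. vec_norm n (f k))"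
    using insert by simp
  finally show ?case using insert by simp
qed

lemma vn_unimod: "(\<And>i. cmod (u i) = 1) \<Longrightarrow> vec_norm n (\<lambda>i. u i * v i) = vec_norm n v"
  unfolding vec_norm_def by (simp add: norm_mult)

lemma vn_eq0: "vec_norm n v = 0 \<Longrightarrow> i < n \<Longrightarrow> v i = 0"
  unfolding vn_L2 by (subst (asm) L2_set_eq_0_iff) auto

lemma comp_le_vn: "j < n \<Longrightarrow> cmod (v j) \<le> vec_norm n v"
  unfolding vn_L2 by (rule member_le_L2_set) auto

lemma mat_apply_scale: "mat_apply n A (\<lambda>j. c * v j) = (\<lambda>i. c * mat_apply n A v i)"
  unfolding mat_apply_def by (auto simp: sum_distrib_left algebra_simps)

definition mbound :: "nat \<Rightarrow> (nat \<Rightarrow> nat \<Rightarrow> complex) \<Rightarrow> real" where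
  "mbound n A = (\<Sum>i<n. \<Sum>j<n. cmod (A i j))"

lemma mbound_nonneg: "0 \<le> mbound n A"
  unfolding mbound_def by (simp add: sum_nonneg)

lemma vn_mat_bound: "vec_norm n (mat_apply n A v) \<le> mbound n A * vec_norm n v"
proof -
  have "vec_norm n (mat_apply n A v) \<le> (\<Sum>i<n. cmod (mat_apply n A v i))"
    unfolding vn_L2 by (rule L2_set_le_sum) simp
  also have "\<dots> \<le> (\<Sum>i<n. (\<Sum>j<n. cmod (A i j)) * vec_norm n v)"
  proof (rule sum_mono)
    fix i assume "i \<in> {..<n}"
    have "cmod (mat_apply n A v i) \<le> (\<Sum>j<n. cmod (A i j * v j))"
      unfolding mat_apply_def by (rule norm_sum)
    also have "\<dots> \<le> (\<Sum>j<n. cmod (A i j) * vec_norm n v)"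
      by (rule sum_mono) (auto simp: norm_mult intro!: mult_left_mono comp_le_vn)
    finally show "cmod (mat_apply n A v i) \<le> (\<Sum>j<n. cmod (A i j)) * vec_norm n v"
      by (simp add: sum_distrib_right)
  qed
  finally show ?thesis unfolding mbound_def by (simp add: sum_distrib_right)
qed

lemma opn_bdd: "bdd_above {vec_norm n (mat_apply n A v) | v. vec_norm n v \<le> 1}"
proof (rule bdd_aboveI)
  fix x assume "x \<in> {vec_norm n (mat_apply n A v) | v. vec_norm n v \<le> 1}"
  then obtain v where v: "x = vec_norm n (mat_apply n A v)" "vec_norm n v \<le> 1" by auto
  have "x \<le> mbound n A * vec_norm n v" using v vn_mat_bound by simp
  also have "\<dots> \<le> mbound n A * 1" using v mbound_nonneg by (intro mult_left_mono) auto
  finally show "x \<le> mbound n A" by simp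
qed

lemma opn_upper: "vec_norm n v \<le> 1 \<Longrightarrow> vec_norm n (mat_apply n A v) \<le> op_norm n A"
  unfolding op_norm_def by (rule cSup_upper[OF _ opn_bdd]) auto

lemma opn_nonneg: "0 \<le> op_norm n A"
proof -
  have "vec_norm n (mat_apply n A (\<lambda>i. 0)) \<le> op_norm n A"
    by (rule opn_upper) (simp add: vn_zero)
  then show ?thesis using vn_nonneg order_trans by blast
qed

lemma opn_le:
  assumes "0 \<le> c" "\<And>v. vec_norm n (mat_apply n A v) \<le> c * vec_norm n v"
  shows "op_norm n A \<le> c"
  unfolding op_norm_def
proof (rule cSup_least)
  show "{vec_norm n (mat_apply n A v) | v. vec_norm n v \<le> 1} \<noteq> {}"
    by (auto intro!: exI[of _ "\<lambda>i. 0"] simp: vn_zero)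
next
  fix x assume "x \<in> {vec_norm n (mat_apply n A v) | v. vec_norm n v \<le> 1}"
  then obtain v where v: "x = vec_norm n (mat_apply n A v)" "vec_norm n v \<le> 1" by auto
  have "x \<le> c * vec_norm n v" using v assms by simp
  also have "\<dots> \<le> c * 1" using v assms by (intro mult_left_mono) auto
  finally show "x \<le> c" by simp
qed

lemma opn_apply: "vec_norm n (mat_apply n A v) \<le> op_norm n A * vec_norm n v"
proof (cases "vec_norm n v = 0")
  case True
  then have "mat_apply n A v = (\<lambda>i. 0)"
    unfolding mat_apply_def using vn_eq0[OF True] by (auto intro!: ext sum.neutral)
  then show ?thesis using True by (simp add: vn_zero)
next
  case False
  define r where "r = vec_norm n v"
  have r: "r > 0" using False vn_nonneg[of n v] unfolding r_def by linarith
  define w where "w = (\<lambda>j. complex_of_real (1 / r) * v j)"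
  have vw: "v = (\<lambda>j. complex_of_real r * w j)" unfolding w_def using r by auto
  have "vec_norm n w = 1" unfolding w_def vn_scale using r by (simp add: r_def[symmetric] norm_divide)
  then have "vec_norm n (mat_apply n A w) \<le> op_norm n A" by (intro opn_upper) simp
  then have "r * vec_norm n (mat_apply n A w) \<le> r * op_norm n A" using r by simp
  moreover have "vec_norm n (mat_apply n A v) = r * vec_norm n (mat_apply n A w)"
    unfolding vw mat_apply_scale vn_scale using r by simp
  ultimately show ?thesis unfolding r_def by (simp add: mult.commute)
qed

lemma opn_zero: "op_norm n (\<lambda>i j. 0) = 0"
proof -
  have "op_norm n (\<lambda>i j. 0) \<le> 0"
    by (rule opn_le) (auto simp: mat_apply_def vn_zero)
  moreover have "vec_norm n (mat_apply n (\<lambda>i j. 0) (\<lambda>i. 0)) \<le> op_norm n (\<lambda>i j. 0)"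
    by (rule opn_upper) (simp add: vn_zero)
  ultimately show ?thesis using vn_nonneg by (meson order_antisym order_trans)
qed

lemma schur_le:
  assumes "\<And>R. op_norm n R \<le> 1 \<Longrightarrow> op_norm n (\<lambda>i j. T i j * R i j) \<le> c"
  shows "schur_mult_norm n T \<le> c"
  unfolding schur_mult_norm_def
proof (rule cSup_least)
  show "{op_norm n (\<lambda>i j. T i j * R i j) | R. op_norm n R \<le> 1} \<noteq> {}"
    by (auto intro!: exI[of _ "\<lambda>i j. 0"] simp: opn_zero)
next
  fix x assume "x \<in> {op_norm n (\<lambda>i j. T i j * R i j) | R. op_norm n R \<le> 1}"
  then show "x \<le> c" using assms by auto
qed

lemma schur_upper:
  assumes "\<And>R. op_norm n R \<le> 1 \<Longrightarrow> op_norm n (\<lambda>i j. T i j * R i j) \<le> c"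
    and "op_norm n R \<le> 1"
  shows "op_norm n (\<lambda>i j. T i j * R i j) \<le> schur_mult_norm n T"
  unfolding schur_mult_norm_def
proof (rule cSup_upper)
  show "op_norm n (\<lambda>i j. T i j * R i j) \<in> {op_norm n (\<lambda>i j. T i j * R i j) | R. op_norm n R \<le> 1}"
    using assms(2) by auto
  show "bdd_above {op_norm n (\<lambda>i j. T i j * R i j) | R. op_norm n R \<le> 1}"
    using assms(1) by (auto intro!: bdd_aboveI[of _ c])
qed


lemma dvd_small2: assumes "i < n" "j < n" shows "(int n dvd (int i - int j - 1)) = (i = (j + 1) mod n)"
proof (cases "j + 1 < n")
  case True
  then show ?thesis using dvd_small[OF assms(1) True] by (simp add: algebra_simps)
next
  case False
  then have j: "j + 1 = n" using assms by simp
  have e: "int i - int j - 1 = int i - int 0 - int n" using j by simp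
  have "(int n dvd (int i - int j - 1)) = (int n dvd (int i - int 0))"
    unfolding e by (metis add_diff_cancel_right' diff_add_cancel dvd_add dvd_diff dvd_refl)
  also have "\<dots> = (i = 0)" using assms by (intro dvd_small) auto
  finally show ?thesis using j by simp
qed

definition cc :: "nat \<Rightarrow> nat \<Rightarrow> complex" where
  "cc n k = (1 + ee n (- real k)) / of_nat n"

lemma T_four:
  assumes n: "n > 0" and ij: "i < n" "j < n"
  shows "shift_plus_id n i j = (\<Sum>k<n. cc n k * ee n (real k * (real i - real j)))"
proof -
  have "(\<Sum>k<n. cc n k * ee n (real k * (real i - real j))) =
     (\<Sum>k<n. ee n (real k * of_int (int i - int j)) + ee n (real k * of_int (int i - int j - 1))) / of_nat n"
    unfolding cc_def sum_divide_distrib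
    by (rule sum.cong) (auto simp: algebra_simps ee_add[symmetric])
  also have "\<dots> = ((if int n dvd (int i - int j) then of_nat n else 0) + (if int n dvd (int i - int j - 1) then of_nat n else 0)) / of_nat n"
    by (simp only: sum.distrib ee_sum[OF n])
  also have "\<dots> = shift_plus_id n i j"
    unfolding dvd_small[OF ij] dvd_small2[OF ij] shift_plus_id_def using n by auto
  finally show ?thesis by simp
qed

lemma apply_four:
  assumes n: "n > 0" and i: "i < n"
  shows "mat_apply n (\<lambda>i j. shift_plus_id n i j * R i j) v i =
    (\<Sum>k<n. cc n k * (ee n (real k * real i) * mat_apply n R (\<lambda>j. ee n (- (real k * real j)) * v j) i))"
proof -
  have "mat_apply n (\<lambda>i j. shift_plus_id n i j * R i j) v i =
     (\<Sum>j<n. \<Sum>k<n. cc n k * (ee n (real k * real i) * (R i j * (ee n (- (real k * real j)) * v j))))"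
    unfolding mat_apply_def
  proof (rule sum.cong[OF refl])
    fix j assume "j \<in> {..<n}"
    then have "shift_plus_id n i j = (\<Sum>k<n. cc n k * ee n (real k * (real i - real j)))"
      using T_four[OF n i] by simp
    moreover have "ee n (real k * (real i - real j)) = ee n (real k * real i) * ee n (- (real k * real j))" for k
      by (simp add: ee_add[symmetric] algebra_simps)
    ultimately show "shift_plus_id n i j * R i j * v j =
      (\<Sum>k<n. cc n k * (ee n (real k * real i) * (R i j * (ee n (- (real k * real j)) * v j))))"
      by (simp add: sum_distrib_left sum_distrib_right mult_ac)
  qed
  also have "\<dots> = (\<Sum>k<n. \<Sum>j<n. cc n k * (ee n (real k * real i) * (R i j * (ee n (- (real k * real j)) * v j))))"
    by (rule sum.swap)
  also have "\<dots> = (\<Sum>k<n. cc n k * (ee n (real k * real i) * mat_apply n R (\<lambda>j. ee n (- (real k * real j)) * v j) i))"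
    unfolding mat_apply_def by (simp add: sum_distrib_left)
  finally show ?thesis .
qed

lemma upper_op:
  assumes n: "n > 0" and R: "op_norm n R \<le> 1"
  shows "op_norm n (\<lambda>i j. shift_plus_id n i j * R i j) \<le> (\<Sum>k<n. cmod (cc n k))"
proof (rule opn_le)
  show "0 \<le> (\<Sum>k<n. cmod (cc n k))" by (simp add: sum_nonneg)
  fix v
  define w where "w k = (\<lambda>j. ee n (- (real k * real j)) * v j)" for k
  have "vec_norm n (mat_apply n (\<lambda>i j. shift_plus_id n i j * R i j) v) =
        vec_norm n (\<lambda>i. \<Sum>k<n. cc n k * (ee n (real k * real i) * mat_apply n R (w k) i))"
    by (rule vn_cong) (simp add: apply_four[OF n] w_def)
  also have "\<dots> \<le> (\<Sum>k<n. vec_norm n (\<lambda>i. cc n k * (ee n (real k * real i) * mat_apply n R (w k) i)))"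
    by (rule vn_sum) simp
  also have "\<dots> \<le> (\<Sum>k<n. cmod (cc n k) * vec_norm n v)"
  proof (rule sum_mono)
    fix k assume "k \<in> {..<n}"
    have "vec_norm n (\<lambda>i. cc n k * (ee n (real k * real i) * mat_apply n R (w k) i)) =
          cmod (cc n k) * vec_norm n (mat_apply n R (w k))"
      by (simp add: vn_scale vn_unimod)
    also have "vec_norm n (mat_apply n R (w k)) \<le> op_norm n R * vec_norm n (w k)"
      by (rule opn_apply)
    also have "vec_norm n (w k) = vec_norm n v" unfolding w_def by (simp add: vn_unimod)
    also have "op_norm n R * vec_norm n v \<le> vec_norm n v"
      using R opn_nonneg[of n R] by (intro mult_left_le_one_le) auto
    finally show "vec_norm n (\<lambda>i. cc n k * (ee n (real k * real i) * mat_apply n R (w k) i)) \<le> cmod (cc n k) * vec_norm n v"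
      by (simp add: mult_left_mono)
  qed
  finally show "vec_norm n (mat_apply n (\<lambda>i j. shift_plus_id n i j * R i j) v) \<le> (\<Sum>k<n. cmod (cc n k)) * vec_norm n v"
    by (simp add: sum_distrib_right)
qed

lemma cmod_1_cis: "cmod (1 + cis t) = 2 * \<bar>cos (t/2)\<bar>"
proof -
  have "cmod (1 + cis t) = sqrt ((1 + cos t)^2 + (sin t)^2)" by (simp add: cmod_def)
  also have "(1 + cos t)^2 + (sin t)^2 = (2 * cos (t/2))^2"
  proof -
    have c: "cos t = 2 * (cos (t/2))^2 - 1" using cos_double_cos[of "t/2"] by simp
    have "(1 + cos t)^2 + (sin t)^2 = 2 + 2 * cos t"
      using sin_cos_squared_add[of t] by (simp add: power2_eq_square algebra_simps)
    then show ?thesis unfolding c by (simp add: power2_eq_square algebra_simps)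
  qed
  finally show ?thesis by (simp only: real_sqrt_abs abs_mult)
qed

lemma sum_cc: assumes n: "n > 0" shows "(\<Sum>k<n. cmod (cc n k)) = 2 / real n * (\<Sum>k<n. \<bar>cos (real k * pi / real n)\<bar>)"
proof -
  have "cmod (cc n k) = 2 / real n * \<bar>cos (real k * pi / real n)\<bar>" for k
  proof -
    have "cmod (cc n k) = cmod (1 + cis (2 * pi * (- real k) / real n)) / real n"
      unfolding cc_def ee_def by (simp add: norm_divide)
    also have "\<dots> = 2 * \<bar>cos (2 * pi * (- real k) / real n / 2)\<bar> / real n" by (simp only: cmod_1_cis)
    also have "cos (2 * pi * (- real k) / real n / 2) = cos (real k * pi / real n)"
      by (simp add: field_simps)
    finally show ?thesis by simp
  qed
  then show ?thesis by (simp add: sum_distrib_left)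
qed


lemma parseval:
  assumes n: "n > 0"
  shows "(\<Sum>i<n. (cmod (\<Sum>m<n. a m * ee n (real i * real m)))^2) = real n * (\<Sum>m<n. (cmod (a m))^2)"
proof -
  have "complex_of_real (\<Sum>i<n. (cmod (\<Sum>m<n. a m * ee n (real i * real m)))^2) =
     (\<Sum>i<n. (\<Sum>m<n. a m * ee n (real i * real m)) * cnj (\<Sum>m<n. a m * ee n (real i * real m)))"
    unfolding of_real_sum by (rule sum.cong[OF refl]) (rule complex_norm_square)
  also have "\<dots> = (\<Sum>i<n. \<Sum>m<n. \<Sum>m'<n. a m * cnj (a m') * (ee n (real i * real m) * cnj (ee n (real i * real m'))))"
    by (simp add: sum_product cnj_sum mult_ac)
  also have "\<dots> = (\<Sum>m<n. \<Sum>i<n. \<Sum>m'<n. a m * cnj (a m') * (ee n (real i * real m) * cnj (ee n (real i * real m'))))"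
    by (rule sum.swap)
  also have "\<dots> = (\<Sum>m<n. \<Sum>m'<n. \<Sum>i<n. a m * cnj (a m') * (ee n (real i * real m) * cnj (ee n (real i * real m'))))"
    by (rule sum.cong[OF refl], rule sum.swap)
  also have "\<dots> = (\<Sum>m<n. \<Sum>m'<n. a m * cnj (a m') * (if m = m' then of_nat n else 0))"
    by (rule sum.cong[OF refl], rule sum.cong[OF refl]) (simp add: ee_orth sum_distrib_left[symmetric])
  also have "\<dots> = (\<Sum>m<n. a m * cnj (a m) * of_nat n)"
    by (rule sum.cong[OF refl]) (simp add: if_distrib cong: if_cong)
  also have "\<dots> = (\<Sum>m<n. of_nat n * complex_of_real ((cmod (a m))^2))"
    by (rule sum.cong[OF refl]) (simp only: complex_norm_square mult_ac)
  also have "\<dots> = complex_of_real (real n * (\<Sum>m<n. (cmod (a m))^2))"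
    by (simp add: sum_distrib_left)
  finally show ?thesis by (simp only: of_real_eq_iff)
qed


definition lam :: "nat \<Rightarrow> nat \<Rightarrow> complex" where
  "lam n m = sgn (cnj (cc n m))"

definition Rl :: "nat \<Rightarrow> nat \<Rightarrow> nat \<Rightarrow> complex" where
  "Rl n = (\<lambda>i j. (\<Sum>m<n. lam n m * ee n (real m * (real j - real i))) / of_nat n)"

lemma lam_norm: "cmod (lam n m) \<le> 1"
  unfolding lam_def by (simp add: norm_sgn)

lemma Rl_apply:
  "mat_apply n (Rl n) v i = cnj (\<Sum>m<n. cnj (lam n m / of_nat n * (\<Sum>j<n. v j * ee n (real m * real j))) * ee n (real i * real m))"
proof -
  have e: "ee n (real m * (real j - real i)) = ee n (real m * real j) * cnj (ee n (real i * real m))" for m j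
    by (simp add: ee_cnj ee_add[symmetric] algebra_simps)
  have "mat_apply n (Rl n) v i = (\<Sum>j<n. \<Sum>m<n. lam n m / of_nat n * (v j * ee n (real m * real j)) * cnj (ee n (real i * real m)))"
    unfolding mat_apply_def Rl_def e by (simp add: sum_divide_distrib sum_distrib_right sum_distrib_left mult_ac)
  also have "\<dots> = (\<Sum>m<n. \<Sum>j<n. lam n m / of_nat n * (v j * ee n (real m * real j)) * cnj (ee n (real i * real m)))"
    by (rule sum.swap)
  also have "\<dots> = (\<Sum>m<n. lam n m / of_nat n * (\<Sum>j<n. v j * ee n (real m * real j)) * cnj (ee n (real i * real m)))"
    by (simp add: sum_distrib_left sum_distrib_right)
  also have "\<dots> = cnj (\<Sum>m<n. cnj (lam n m / of_nat n * (\<Sum>j<n. v j * ee n (real m * real j))) * ee n (real i * real m))"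
    by (simp only: cnj_sum complex_cnj_mult complex_cnj_cnj)
  finally show ?thesis .
qed

lemma Rl_norm:
  assumes n: "n > 0"
  shows "op_norm n (Rl n) \<le> 1"
proof (rule opn_le)
  fix v
  define b where "b m = (\<Sum>j<n. v j * ee n (real m * real j))" for m
  define A where "A m = cnj (lam n m / of_nat n * b m)" for m
  have "(vec_norm n (mat_apply n (Rl n) v))^2 = (\<Sum>i<n. (cmod (\<Sum>m<n. A m * ee n (real i * real m)))^2)"
    unfolding vn_sq Rl_apply A_def b_def by (simp only: complex_mod_cnj)
  also have "\<dots> = real n * (\<Sum>m<n. (cmod (A m))^2)" by (rule parseval[OF n])
  also have "\<dots> \<le> real n * (\<Sum>m<n. (cmod (b m) / real n)^2)"
  proof (intro mult_left_mono sum_mono)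
    fix m
    have "cmod (A m) = cmod (lam n m) * (cmod (b m) / real n)"
      unfolding A_def by (simp add: norm_mult norm_divide)
    also have "\<dots> \<le> cmod (b m) / real n"
      using lam_norm[of n m] by (intro mult_left_le_one_le) auto
    finally show "(cmod (A m))^2 \<le> (cmod (b m) / real n)^2"
      by (intro power_mono) auto
  qed simp
  also have "\<dots> = (\<Sum>m<n. (cmod (b m))^2) / real n"
    using n by (simp add: power_divide sum_divide_distrib[symmetric] power2_eq_square)
  also have "(\<Sum>m<n. (cmod (b m))^2) = real n * (\<Sum>j<n. (cmod (v j))^2)"
    unfolding b_def by (rule parseval[OF n])
  also have "real n * (\<Sum>j<n. (cmod (v j))^2) / real n = (1 * vec_norm n v)^2"
    using n by (simp add: vn_sq)
  finally show "vec_norm n (mat_apply n (Rl n) v) \<le> 1 * vec_norm n v"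
    by (rule power2_le_imp_le) simp
qed simp


lemma cc_lam: "cc n k * lam n k = complex_of_real (cmod (cc n k))"
proof (cases "cc n k = 0")
  case True
  then show ?thesis by (simp add: lam_def)
next
  case False
  define z where "z = cc n k"
  have z: "z \<noteq> 0" using False z_def by simp
  have "lam n k = cnj z / complex_of_real (cmod z)"
    unfolding lam_def z_def[symmetric] by (simp add: sgn_div_norm scaleR_conv_of_real divide_inverse mult.commute)
  then have "cc n k * lam n k = (z * cnj z) / complex_of_real (cmod z)" unfolding z_def by simp
  also have "\<dots> = complex_of_real ((cmod z)^2 / cmod z)" by (simp only: complex_norm_square[symmetric] of_real_divide)
  also have "(cmod z)^2 / cmod z = cmod z" using z by (simp add: power2_eq_square)
  finally show ?thesis unfolding z_def .
qed

lemma sum_sep: "(\<Sum>i\<in>A. \<Sum>j\<in>B. (c::complex) * (P i * Q j)) = c * ((\<Sum>i\<in>A. P i) * (\<Sum>j\<in>B. Q j))"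
proof -
  have "c * ((\<Sum>i\<in>A. P i) * (\<Sum>j\<in>B. Q j)) = c * (\<Sum>i\<in>A. \<Sum>j\<in>B. P i * Q j)"
    by (rule arg_cong[where f="\<lambda>x. c * x"], rule sum_product)
  also have "\<dots> = (\<Sum>i\<in>A. c * (\<Sum>j\<in>B. P i * Q j))" by (rule sum_distrib_left)
  also have "\<dots> = (\<Sum>i\<in>A. \<Sum>j\<in>B. c * (P i * Q j))"
    by (rule sum.cong[OF refl], rule sum_distrib_left)
  finally show ?thesis by (rule sym)
qed

lemma lower_sum:
  assumes n: "n > 0"
  shows "(\<Sum>i<n. mat_apply n (\<lambda>i j. shift_plus_id n i j * Rl n i j) (\<lambda>j. 1) i) = of_nat n * complex_of_real (\<Sum>k<n. cmod (cc n k))"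
proof -
  define E where "E i k = ee n (real i * real k)" for i k
  define X where "X i j k m = (cc n k * lam n m / of_nat n) * ((E i k * cnj (E i m)) * (E j m * cnj (E j k)))" for i j k m
  have pt: "shift_plus_id n i j * Rl n i j = (\<Sum>k<n. \<Sum>m<n. X i j k m)" if ij: "i < n" "j < n" for i j
  proof -
    have e1: "ee n (real k * (real i - real j)) = E i k * cnj (E j k)" for k
      unfolding E_def by (simp add: ee_cnj ee_add[symmetric] algebra_simps)
    have e2: "ee n (real m * (real j - real i)) = E j m * cnj (E i m)" for m
      unfolding E_def by (simp add: ee_cnj ee_add[symmetric] algebra_simps)
    show ?thesis unfolding T_four[OF n ij] Rl_def e1 e2 X_def
      by (simp add: sum_product sum_divide_distrib mult_ac)
  qed
  have "(\<Sum>i<n. mat_apply n (\<lambda>i j. shift_plus_id n i j * Rl n i j) (\<lambda>j. 1) i) =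
      (\<Sum>i<n. \<Sum>j<n. \<Sum>k<n. \<Sum>m<n. X i j k m)"
    unfolding mat_apply_def by (simp add: pt)
  also have "\<dots> = (\<Sum>i<n. \<Sum>k<n. \<Sum>j<n. \<Sum>m<n. X i j k m)"
    by (rule sum.cong[OF refl], rule sum.swap)
  also have "\<dots> = (\<Sum>i<n. \<Sum>k<n. \<Sum>m<n. \<Sum>j<n. X i j k m)"
    by (rule sum.cong[OF refl], rule sum.cong[OF refl], rule sum.swap)
  also have "\<dots> = (\<Sum>k<n. \<Sum>i<n. \<Sum>m<n. \<Sum>j<n. X i j k m)"
    by (rule sum.swap)
  also have "\<dots> = (\<Sum>k<n. \<Sum>m<n. \<Sum>i<n. \<Sum>j<n. X i j k m)"
    by (rule sum.cong[OF refl], rule sum.swap)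
  also have "\<dots> = (\<Sum>k<n. \<Sum>m<n. (cc n k * lam n m / of_nat n) *
        ((\<Sum>i<n. E i k * cnj (E i m)) * (\<Sum>j<n. E j m * cnj (E j k))))"
    unfolding X_def by (intro sum.cong refl) (rule sum_sep)
  also have "\<dots> = (\<Sum>k<n. \<Sum>m<n. (cc n k * lam n m / of_nat n) *
        ((if k = m then of_nat n else 0) * (if m = k then of_nat n else 0)))"
    unfolding E_def by (intro sum.cong refl) (simp add: ee_orth)
  also have "\<dots> = (\<Sum>k<n. of_nat n * (cc n k * lam n k))"
    using n by (intro sum.cong refl) (simp add: if_distrib cong: if_cong)
  also have "\<dots> = of_nat n * complex_of_real (\<Sum>k<n. cmod (cc n k))"
    by (simp add: cc_lam sum_distrib_left)
  finally show ?thesis .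
qed

lemma schur_eq:
  assumes n: "n > 0"
  shows "schur_mult_norm n (shift_plus_id n) = (\<Sum>k<n. cmod (cc n k))"
proof (rule order_antisym)
  show "schur_mult_norm n (shift_plus_id n) \<le> (\<Sum>k<n. cmod (cc n k))"
    by (rule schur_le) (rule upper_op[OF n])
next
  define V where "V = (\<Sum>k<n. cmod (cc n k))"
  define M where "M = (\<lambda>i j. shift_plus_id n i j * Rl n i j)"
  define w where "w = mat_apply n M (\<lambda>j. 1)"
  have V0: "0 \<le> V" unfolding V_def by (simp add: sum_nonneg)
  have one: "vec_norm n (\<lambda>j. 1) = sqrt (real n)" unfolding vec_norm_def by simp
  have "real n * V = cmod (\<Sum>i<n. w i)"
    unfolding w_def M_def lower_sum[OF n] V_def[symmetric] using V0 by (simp add: norm_mult)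
  also have "\<dots> \<le> (\<Sum>i<n. cmod (w i))" by (rule norm_sum)
  also have "\<dots> = (\<Sum>i<n. \<bar>cmod (w i)\<bar> * \<bar>1\<bar>)" by simp
  also have "\<dots> \<le> L2_set (\<lambda>i. cmod (w i)) {..<n} * L2_set (\<lambda>i. 1) {..<n}"
    by (rule L2_set_mult_ineq)
  also have "\<dots> = vec_norm n w * sqrt (real n)" by (simp add: vn_L2 L2_set_constant)
  also have "\<dots> \<le> op_norm n M * vec_norm n (\<lambda>j. 1) * sqrt (real n)"
    unfolding w_def by (intro mult_right_mono opn_apply) auto
  also have "\<dots> = real n * op_norm n M" unfolding one by simp
  finally have "V \<le> op_norm n M" using n by simp
  also have "op_norm n M \<le> schur_mult_norm n (shift_plus_id n)"
    unfolding M_def by (rule schur_upper[OF upper_op[OF n] Rl_norm[OF n]])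
  finally show "(\<Sum>k<n. cmod (cc n k)) \<le> schur_mult_norm n (shift_plus_id n)" unfolding V_def .
qed




lemma x_cos_lt_sin: assumes "0 < x" "x \<le> pi/2" shows "x * cos x < sin x"
proof -
  have "(\<lambda>x. sin x - x * cos x) 0 < (\<lambda>x. sin x - x * cos x) x"
  proof (rule DERIV_pos_imp_increasing_open[OF assms(1)])
    fix y assume y: "0 < y" "y < x"
    have "((\<lambda>x. sin x - x * cos x) has_real_derivative (cos y - (1 * cos y + y * (- sin y)))) (at y)"
      by (auto intro!: derivative_eq_intros)
    moreover have "0 < cos y - (1 * cos y + y * (- sin y))"
      using y assms sin_gt_zero[of y] by (simp add: pi_half_less_two)
    ultimately show "\<exists>d. ((\<lambda>x. sin x - x * cos x) has_real_derivative d) (at y) \<and> 0 < d" by blast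
  next
    show "continuous_on {0..x} (\<lambda>x. sin x - x * cos x)"
      by (intro continuous_intros)
  qed
  then show ?thesis by simp
qed

lemma sinc_dec: assumes "0 < a" "a < b" "b \<le> pi/2" shows "sin b / b < sin a / a"
proof (rule DERIV_neg_imp_decreasing[OF assms(2)])
  fix x assume x: "a \<le> x" "x \<le> b"
  have "((\<lambda>x. sin x / x) has_real_derivative (cos x * x - sin x * 1) / (x ^ 2)) (at x)"
    using x assms by (auto intro!: derivative_eq_intros simp: power2_eq_square)
  moreover have "(cos x * x - sin x * 1) / (x ^ 2) < 0"
    using x_cos_lt_sin[of x] x assms by (intro divide_neg_pos) (auto simp: mult.commute)
  ultimately show "\<exists>y. ((\<lambda>x. sin x / x) has_real_derivative y) (at x) \<and> y < 0" by blast
qed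

lemma sin_cos_lt: assumes "0 < x" "x < pi/2" shows "sin x * cos x < x"
proof -
  have "cos x < 1" using cos_monotone_0_pi[of 0 x] assms by simp
  moreover have "0 < sin x" using sin_gt_zero[of x] assms by simp
  ultimately have "sin x * cos x < sin x" by simp
  also have "\<dots> \<le> x" using sin_x_le_x[of x] assms by simp
  finally show ?thesis .
qed

lemma xcot_dec: assumes "0 < a" "a < b" "b < pi/2" shows "b * cos b / sin b < a * cos a / sin a"
proof (rule DERIV_neg_imp_decreasing[OF assms(2)])
  fix x assume x: "a \<le> x" "x \<le> b"
  have sx: "0 < sin x" using sin_gt_zero[of x] x assms by simp
  have "((\<lambda>x. x * cos x / sin x) has_real_derivative ((1 * cos x + x * (- sin x)) * sin x - x * cos x * cos x) / (sin x ^ 2)) (at x)"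
    using sx by (auto intro!: derivative_eq_intros simp: power2_eq_square)
  moreover have "((1 * cos x + x * (- sin x)) * sin x - x * cos x * cos x) = sin x * cos x - x"
  proof -
    have e: "sin x * sin x + cos x * cos x = 1" using sin_cos_squared_add[of x] by (simp add: power2_eq_square)
    have h: "x * (cos x * cos x) + x * (sin x * sin x) = x" by (metis e distrib_left mult_1_right add.commute)
    then show ?thesis by (simp add: algebra_simps)
  qed
  moreover have "sin x * cos x - x < 0" using sin_cos_lt[of x] x assms by simp
  ultimately show "\<exists>y. ((\<lambda>x. x * cos x / sin x) has_real_derivative y) (at x) \<and> y < 0"
    using sx by (intro exI[of _ "(sin x * cos x - x) / (sin x ^ 2)"]) (auto intro: divide_neg_pos)
qed

lemma cos_sum_formula:
  "2 * sin (x/2) * (\<Sum>k\<le>p. cos (real k * x)) = sin ((real p + 1/2) * x) + sin (x/2)"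
proof (induction p)
  case 0
  then show ?case by simp
next
  case (Suc p)
  have "2 * sin (x/2) * (\<Sum>k\<le>Suc p. cos (real k * x)) =
     sin ((real p + 1/2) * x) + sin (x/2) + 2 * (sin (x/2) * cos (real (Suc p) * x))"
    using Suc by (simp add: algebra_simps)
  also have "sin (x/2) * cos (real (Suc p) * x) = (sin (x/2 + real (Suc p) * x) + sin (x/2 - real (Suc p) * x)) / 2"
    by (rule sin_times_cos)
  also have "x/2 + real (Suc p) * x = (real (Suc p) + 1/2) * x" by (simp add: algebra_simps)
  also have "x/2 - real (Suc p) * x = - ((real p + 1/2) * x)" by (simp add: algebra_simps)
  finally have "2 * sin (x/2) * (\<Sum>k\<le>Suc p. cos (real k * x)) =
     sin ((real p + 1/2) * x) + sin (x/2) + (sin ((real (Suc p) + 1/2) * x) - sin ((real p + 1/2) * x))"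
    by (simp add: field_simps)
  then show ?case by (simp add: field_simps)
qed



lemma abs_cos_sum:
  assumes n: "n \<ge> 2"
  shows "(\<Sum>k<n. \<bar>cos (real k * pi / real n)\<bar>) = 2 * (\<Sum>k\<le>n div 2. cos (real k * (pi / real n))) - 1"
proof -
  define p where "p = n div 2"
  define f where "f = (\<lambda>k::nat. \<bar>cos (real k * pi / real n)\<bar>)"
  have np: "n = 2 * p \<or> n = 2 * p + 1" unfolding p_def by auto
  have pn: "p < n" "1 \<le> p" unfolding p_def using n by auto
  have split: "{..<n} = {..p} \<union> {p<..<n}" using pn by auto
  have "(\<Sum>k<n. f k) = (\<Sum>k\<le>p. f k) + (\<Sum>k\<in>{p<..<n}. f k)"
    unfolding split by (rule sum.union_disjoint) auto
  also have "(\<Sum>k\<in>{p<..<n}. f k) = (\<Sum>j\<in>{1..n-p-1}. f j)"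
  proof (rule sym, rule sum.reindex_bij_witness[of _ "\<lambda>k. n - k" "\<lambda>k. n - k"])
    fix j assume j: "j \<in> {1..n-p-1}"
    show "n - (n - j) = j" using j by auto
    show "n - j \<in> {p<..<n}" using j by auto
    have "j \<le> n" using j by auto
    then have jn: "real (n - j) = real n - real j" by (simp add: of_nat_diff)
    have "real (n - j) * pi / real n = pi - real j * pi / real n"
      unfolding jn using n by (simp add: field_simps)
    then show "f (n - j) = f j" unfolding f_def by simp
  qed auto
  also have "(\<Sum>j\<in>{1..n-p-1}. f j) = (\<Sum>j\<in>{1..p}. f j)"
  proof (cases "n = 2 * p")
    case True
    then have "{1..p} = insert p {1..n-p-1}" using pn by auto
    moreover have "f p = 0" unfolding f_def using True pn by (simp add: field_simps)
    moreover have "p \<notin> {1..n-p-1}" using True by auto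
    ultimately show ?thesis by simp
  next
    case False
    then have "n - p - 1 = p" using np by auto
    then show ?thesis by simp
  qed
  also have "(\<Sum>j\<in>{1..p}. f j) = (\<Sum>j\<le>p. f j) - f 0"
  proof -
    have "{..p} = insert 0 {1..p}" by auto
    then show ?thesis by simp
  qed
  also have "f 0 = 1" unfolding f_def by simp
  also have "(\<Sum>k\<le>p. f k) = (\<Sum>k\<le>p. cos (real k * (pi / real n)))"
  proof (rule sum.cong[OF refl])
    fix k assume "k \<in> {..p}"
    then have "2 * real k \<le> real n" unfolding p_def by auto
    then have "real k * pi / real n \<le> pi / 2" using n by (simp add: field_simps)
    moreover have "0 \<le> real k * pi / real n" by simp
    ultimately have "0 \<le> cos (real k * pi / real n)" using pi_gt_zero by (intro cos_ge_zero) linarith+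
    then show "f k = cos (real k * (pi / real n))" unfolding f_def by simp
  qed
  finally show ?thesis unfolding f_def p_def by simp
qed


definition VV :: "nat \<Rightarrow> real" where
  "VV n = 2 / real n * (\<Sum>k<n. \<bar>cos (real k * pi / real n)\<bar>)"

lemma VV_sin: assumes n: "n \<ge> 2"
  shows "VV n = 2 / real n * (sin ((real (n div 2) + 1/2) * (pi / real n)) / sin (pi / (2 * real n)))"
proof -
  define x where "x = pi / real n"
  have x2: "x / 2 = pi / (2 * real n)" unfolding x_def by simp
  have sx: "0 < sin (x/2)" unfolding x2 using n
    by (intro sin_gt_zero) (auto simp: field_simps)
  have "2 * sin (x/2) * (\<Sum>k\<le>n div 2. cos (real k * x)) = sin ((real (n div 2) + 1/2) * x) + sin (x/2)"
    by (rule cos_sum_formula)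
  then have "2 * (\<Sum>k\<le>n div 2. cos (real k * x)) - 1 = sin ((real (n div 2) + 1/2) * x) / sin (x/2)"
    using sx by (simp add: field_simps)
  then show ?thesis unfolding VV_def abs_cos_sum[OF n] x_def[symmetric] x2[symmetric] by simp
qed

lemma VV_odd: assumes "n \<ge> 2" "odd n"
  shows "VV n = 2 / (real n * sin (pi / (2 * real n)))"
proof -
  obtain p where p: "n = 2 * p + 1" using assms(2) oddE by blast
  have "(real (n div 2) + 1/2) * (pi / real n) = pi / 2" unfolding p by (simp add: field_simps)
  then show ?thesis unfolding VV_sin[OF assms(1)] by (simp only: sin_pi_half) simp
qed

lemma VV_even: assumes "n \<ge> 2" "even n"
  shows "VV n = 2 * cos (pi / (2 * real n)) / (real n * sin (pi / (2 * real n)))"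
proof -
  obtain p where p: "n = 2 * p" using assms(2) by blast
  have "p > 0" using assms p by auto
  then have "(real (n div 2) + 1/2) * (pi / real n) = pi / 2 + pi / (2 * real n)" unfolding p
    by (simp add: field_simps)
  then show ?thesis unfolding VV_sin[OF assms(1)] by (simp only: sin_add) simp
qed


lemma VV_sinc: assumes "n \<ge> 2"
  shows "VV n = 4 / pi * (if even n then cos (pi / (2 * real n)) else 1) / (sin (pi / (2 * real n)) / (pi / (2 * real n)))"
  using assms VV_odd[OF assms] VV_even[OF assms] by (auto simp: field_simps)

lemma VV_odd_dec: assumes "n \<ge> 3" "odd n" shows "VV (n + 2) < VV n"
proof -
  define a where "a = pi / (2 * real (n + 2))"
  define b where "b = pi / (2 * real n)"
  have ab: "0 < a" "a < b" "b \<le> pi / 2" unfolding a_def b_def using assms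
    by (auto simp: field_simps)
  have "sin b / b < sin a / a" by (rule sinc_dec[OF ab])
  moreover have "0 < sin b / b" using ab sin_gt_zero[of b] by simp
  moreover have "0 < sin a / a" using ab sin_gt_zero[of a] by simp
  moreover have e1: "VV n = 4/pi / (sin b/b)" using VV_sinc[of n] assms unfolding b_def by simp
  moreover have e2: "VV (n+2) = 4/pi / (sin a/a)" using VV_sinc[of "n+2"] assms unfolding a_def by simp
  ultimately show ?thesis unfolding e1 e2 by (intro divide_strict_left_mono mult_pos_pos) auto
qed

lemma VV_even_inc: assumes "n \<ge> 3" "even n" shows "VV n < VV (n + 2)"
proof -
  define a where "a = pi / (2 * real (n + 2))"
  define b where "b = pi / (2 * real n)"
  have ab: "0 < a" "a < b" "b < pi / 2" unfolding a_def b_def using assms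
    by (auto simp: field_simps)
  have "b * cos b / sin b < a * cos a / sin a" by (rule xcot_dec[OF ab])
  moreover have "even (n + 2)" using assms by simp
  moreover have "sin b > 0" "sin a > 0" using ab sin_gt_zero[of b] sin_gt_zero[of a] by auto
  moreover have e1: "VV n = 4/pi * (b * cos b / sin b)" using VV_sinc[of n] assms unfolding b_def by simp
  moreover have e2: "VV (n+2) = 4/pi * (a * cos a / sin a)" using VV_sinc[of "n+2"] assms unfolding a_def by simp
  ultimately show ?thesis unfolding e1 e2 by (intro mult_strict_left_mono) auto
qed

lemma sinc_at_0': "((\<lambda>x. sin x / x::real) \<longlongrightarrow> 1) (at 0)"
  using DERIV_sin [of 0] by (auto simp add: has_field_derivative_def field_has_derivative_at)

lemma VV_lim: "VV \<longlonglongrightarrow> 4 / pi"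
proof -
  define b where "b = (\<lambda>n::nat. pi / (2 * real n))"
  have "(\<lambda>n. (pi/2) / real n) \<longlonglongrightarrow> 0" by (rule lim_const_over_n)
  then have b0: "b \<longlonglongrightarrow> 0" unfolding b_def by simp
  have "filterlim b (at 0) sequentially"
    unfolding filterlim_at
  proof (intro conjI b0)
    show "\<forall>\<^sub>F n in sequentially. b n \<in> UNIV \<and> b n \<noteq> 0"
      unfolding eventually_at_top_linorder b_def by (intro exI[of _ 1]) auto
  qed
  then have s1: "(\<lambda>n. sin (b n) / b n) \<longlonglongrightarrow> 1"
    using sinc_at_0' by (rule filterlim_compose[rotated])
  have c1: "(\<lambda>n. cos (b n)) \<longlonglongrightarrow> 1"
    using b0 by (auto intro!: tendsto_eq_intros)
  have L0: "(\<lambda>n. 4 / pi * cos (b n) / (sin (b n) / b n)) \<longlonglongrightarrow> 4 / pi * 1 / 1"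
    using s1 c1 by (intro tendsto_intros) auto
  then have L: "(\<lambda>n. 4 / pi * cos (b n) / (sin (b n) / b n)) \<longlonglongrightarrow> 4 / pi" by simp
  have U0: "(\<lambda>n. 4 / pi * 1 / (sin (b n) / b n)) \<longlonglongrightarrow> 4 / pi * 1 / 1"
    using s1 by (intro tendsto_intros) auto
  then have U: "(\<lambda>n. 4 / pi * 1 / (sin (b n) / b n)) \<longlonglongrightarrow> 4 / pi" by simp
  show ?thesis
  proof (rule tendsto_sandwich[OF _ _ L U])
    show "\<forall>\<^sub>F n in sequentially. 4 / pi * cos (b n) / (sin (b n) / b n) \<le> VV n"
      unfolding eventually_at_top_linorder
    proof (intro exI[of _ 2] allI impI)
      fix n :: nat assume n: "n \<ge> 2"
      have bb: "0 < b n" "b n < pi" unfolding b_def using n by (auto simp: field_simps)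
      then have "0 < sin (b n) / b n" using sin_gt_zero by simp
      moreover have "cos (b n) \<le> 1" by simp
      moreover have e: "VV n = 4 / pi * (if even n then cos (b n) else 1) / (sin (b n) / b n)"
        using VV_sinc[OF n] unfolding b_def by simp
      ultimately show "4 / pi * cos (b n) / (sin (b n) / b n) \<le> VV n"
        unfolding e by (intro divide_right_mono mult_left_mono) auto
    qed
    show "\<forall>\<^sub>F n in sequentially. VV n \<le> 4 / pi * 1 / (sin (b n) / b n)"
      unfolding eventually_at_top_linorder
    proof (intro exI[of _ 2] allI impI)
      fix n :: nat assume n: "n \<ge> 2"
      have bb: "0 < b n" "b n < pi" unfolding b_def using n by (auto simp: field_simps)
      then have "0 < sin (b n) / b n" using sin_gt_zero by simp
      moreover have "cos (b n) \<le> 1" by simp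
      moreover have e: "VV n = 4 / pi * (if even n then cos (b n) else 1) / (sin (b n) / b n)"
        using VV_sinc[OF n] unfolding b_def by simp
      ultimately show "VV n \<le> 4 / pi * 1 / (sin (b n) / b n)"
        unfolding e by (intro divide_right_mono mult_left_mono) auto
    qed
  qed
qed


theorem mainTheorem14:
  shows "(\<forall>n::nat. n \<ge> 3 \<longrightarrow>
            schur_mult_norm n (shift_plus_id n) = 2 / real n * (\<Sum>k<n. \<bar>cos (real k * pi / real n)\<bar>)
          \<and> (even n \<longrightarrow> schur_mult_norm n (shift_plus_id n)
                = 2 * cos (pi / (2 * real n)) / (real n * sin (pi / (2 * real n))))
          \<and> (odd n \<longrightarrow> schur_mult_norm n (shift_plus_id n)
                = 2 / (real n * sin (pi / (2 * real n)))))
       \<and> (\<lambda>n. schur_mult_norm n (shift_plus_id n)) \<longlonglongrightarrow> 4 / pi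
       \<and> (\<forall>n::nat. n \<ge> 3 \<longrightarrow> odd n \<longrightarrow>
            schur_mult_norm (n + 2) (shift_plus_id (n + 2)) < schur_mult_norm n (shift_plus_id n))
       \<and> (\<forall>n::nat. n \<ge> 3 \<longrightarrow> even n \<longrightarrow>
            schur_mult_norm n (shift_plus_id n) < schur_mult_norm (n + 2) (shift_plus_id (n + 2)))"
proof -
  have S: "schur_mult_norm n (shift_plus_id n) = VV n" if "n > 0" for n
    using schur_eq[OF that] sum_cc[OF that] unfolding VV_def by simp
  have A: "\<forall>n::nat. n \<ge> 3 \<longrightarrow>
            schur_mult_norm n (shift_plus_id n) = 2 / real n * (\<Sum>k<n. \<bar>cos (real k * pi / real n)\<bar>)
          \<and> (even n \<longrightarrow> schur_mult_norm n (shift_plus_id n)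
                = 2 * cos (pi / (2 * real n)) / (real n * sin (pi / (2 * real n))))
          \<and> (odd n \<longrightarrow> schur_mult_norm n (shift_plus_id n)
                = 2 / (real n * sin (pi / (2 * real n))))"
  proof (intro allI impI conjI)
    fix n :: nat assume n: "n \<ge> 3"
    then have n0: "n > 0" "n \<ge> 2" by auto
    show "schur_mult_norm n (shift_plus_id n) = 2 / real n * (\<Sum>k<n. \<bar>cos (real k * pi / real n)\<bar>)"
      using S[OF n0(1)] unfolding VV_def .
    show "schur_mult_norm n (shift_plus_id n) = 2 * cos (pi / (2 * real n)) / (real n * sin (pi / (2 * real n)))"
      if "even n" using S[OF n0(1)] VV_even[OF n0(2) that] by simp
    show "schur_mult_norm n (shift_plus_id n) = 2 / (real n * sin (pi / (2 * real n)))"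
      if "odd n" using S[OF n0(1)] VV_odd[OF n0(2) that] by simp
  qed
  have B: "(\<lambda>n. schur_mult_norm n (shift_plus_id n)) \<longlonglongrightarrow> 4 / pi"
  proof (rule Lim_transform_eventually[OF VV_lim])
    show "\<forall>\<^sub>F n in sequentially. VV n = schur_mult_norm n (shift_plus_id n)"
      unfolding eventually_at_top_linorder by (intro exI[of _ 1]) (auto simp: S)
  qed
  have C: "\<forall>n::nat. n \<ge> 3 \<longrightarrow> odd n \<longrightarrow>
            schur_mult_norm (n + 2) (shift_plus_id (n + 2)) < schur_mult_norm n (shift_plus_id n)"
    using VV_odd_dec by (auto simp: S)
  have D: "\<forall>n::nat. n \<ge> 3 \<longrightarrow> even n \<longrightarrow>
            schur_mult_norm n (shift_plus_id n) < schur_mult_norm (n + 2) (shift_plus_id (n + 2))"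
    using VV_even_inc by (auto simp: S)
  show ?thesis using A B C D by blast
qed

end
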